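(* Let $n$ be even and consider the four-objective problem AOAZ (defined in the context). The expected running time of SEMO applied to AOAZ is bounded by $O(\frac{5}{2}n^2\log n)$.
   Context: AOAZ: $\{0,1\}^n\to\mathbb{N}^4$, $\mathrm{AOAZ}(\mathbf{x})=(f_{11}(\mathbf{x}),f_{12}(\mathbf{x}),f_{21}(\mathbf{x}),f_{22}(\mathbf{x}))$ for $\mathbf{x}=(x_1,\dots,x_n)$, $n$ even, where $f_{11}(\mathbf{x})=\sum_{i=n/2+1}^{n}x_i$, $f_{12}(\mathbf{x})=\sum_{i=1}^{n/2}x_i+\sum_{i=n/2+1}^{n}(1-x_i)$, $f_{21}(\mathbf{x})=\sum_{i=1}^{n/2}(1-x_i)+\sum_{i=n/2+1}^{n}x_i$, $f_{22}(\mathbf{x})=\sum_{i=1}^{n/2}x_i$; all four objectives are maximized, with the usual Pareto dominance ($\mathbf{z}\succ\mathbf{x}$ if $\mathbf{z}$ is at least as good in all four objectives and strictly better in one). SEMO: choose $\mathbf{x}$ uniformly from $\{0,1\}^n$, $P=\{\mathbf{x}\}$. Each iteration: pick $\mathbf{x}\in P$ uniformly at random, flip one uniformly random bit to get $\mathbf{x}'$; if there is no $\mathbf{z}\in P$ with $\mathbf{z}\succ\mathbf{x}'$ or $\mathrm{AOAZ}(\mathbf{z})=\mathrm{AOAZ}(\mathbf{x}')$, set $P\leftarrow(P\setminus\{\mathbf{z}\in P:\mathbf{x}'\succ\mathbf{z}\})\cup\{\mathbf{x}'\}$. The running time is the number of fitness evaluations (mutations) until the population covers the whole Pareto front of AOAZ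 for the first time. *)

theory Defs
  imports "HOL-Probability.Probability"
begin

text \<open>Bit strings x = (x_1,...,x_n) are bool lists of length n; x_i is x ! (i-1).\<close>

definition f11 :: "nat \<Rightarrow> bool list \<Rightarrow> nat" where
  "f11 n x = (\<Sum>i\<in>{n div 2..<n}. of_bool (x ! i))"

definition f12 :: "nat \<Rightarrow> bool list \<Rightarrow> nat" where
  "f12 n x = (\<Sum>i\<in>{..<n div 2}. of_bool (x ! i)) + (\<Sum>i\<in>{n div 2..<n}. of_bool (\<not> x ! i))"

definition f21 :: "nat \<Rightarrow> bool list \<Rightarrow> nat" where
  "f21 n x = (\<Sum>i\<in>{..<n div 2}. of_bool (\<not> x ! i)) + (\<Sum>i\<in>{n div 2..<n}. of_bool (x ! i))"

definition f22 :: "nat \<Rightarrow> bool list \<Rightarrow> nat" where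
  "f22 n x = (\<Sum>i\<in>{..<n div 2}. of_bool (x ! i))"

definition AOAZ :: "nat \<Rightarrow> bool list \<Rightarrow> nat \<times> nat \<times> nat \<times> nat" where
  "AOAZ n x = (f11 n x, f12 n x, f21 n x, f22 n x)"

definition weakly_geq :: "nat \<times> nat \<times> nat \<times> nat \<Rightarrow> nat \<times> nat \<times> nat \<times> nat \<Rightarrow> bool" where
  "weakly_geq u v = (case u of (a1,a2,a3,a4) \<Rightarrow> case v of (b1,b2,b3,b4) \<Rightarrow>
      b1 \<le> a1 \<and> b2 \<le> a2 \<and> b3 \<le> a3 \<and> b4 \<le> a4)"

definition dominates :: "nat \<Rightarrow> bool list \<Rightarrow> bool list \<Rightarrow> bool" where
  "dominates n z x = (weakly_geq (AOAZ n z) (AOAZ n x) \<and> AOAZ n z \<noteq> AOAZ n x)"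

definition bitstrings :: "nat \<Rightarrow> bool list set" where
  "bitstrings n = {x. length x = n}"

definition pareto_front :: "nat \<Rightarrow> (nat \<times> nat \<times> nat \<times> nat) set" where
  "pareto_front n = {AOAZ n x | x. x \<in> bitstrings n \<and> \<not> (\<exists>z\<in>bitstrings n. dominates n z x)}"

definition covers_front :: "nat \<Rightarrow> bool list set \<Rightarrow> bool" where
  "covers_front n P = (pareto_front n \<subseteq> AOAZ n ` P)"

definition flip :: "bool list \<Rightarrow> nat \<Rightarrow> bool list" where
  "flip x i = x[i := \<not> x ! i]"

definition semo_update :: "nat \<Rightarrow> bool list set \<Rightarrow> bool list \<Rightarrow> bool list set" where
  "semo_update n P x' =
     (if \<exists>z\<in>P. dominates n z x' \<or> AOAZ n z = AOAZ n x' then P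
      else {z\<in>P. \<not> dominates n x' z} \<union> {x'})"

text \<open>The process is stopped
  (made absorbing) once the population covers the Pareto front, so that the probability
  of not yet covering at time t equals the probability that the running time exceeds t.\<close>
definition semo_step :: "nat \<Rightarrow> bool list set \<Rightarrow> bool list set pmf" where
  "semo_step n P =
     (if covers_front n P then return_pmf P
      else do {
        x \<leftarrow> pmf_of_set P;
        i \<leftarrow> pmf_of_set {..<n};
        return_pmf (semo_update n P (flip x i))
      })"

primrec semo_pop :: "nat \<Rightarrow> nat \<Rightarrow> bool list set pmf" where
  "semo_pop n 0 = map_pmf (\<lambda>x. {x}) (pmf_of_set (bitstrings n))"
| "semo_pop n (Suc t) = bind_pmf (semo_pop n t) (semo_step n)"

text \<open>Expected running time T (number of mutations until the front is covered for the first
  time), via the tail-sum formula E[T] = sum_{t>=0} Pr[T > t]; value in ennreal (may be \<infinity>).\<close>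
definition semo_expected_runtime :: "nat \<Rightarrow> ennreal" where
  "semo_expected_runtime n =
     (\<Sum>t. ennreal (measure_pmf.prob (semo_pop n t) {P. \<not> covers_front n P}))"

end

theory Submission
  imports Defs
begin


lemma card_split_bool:
  assumes "finite A"
  shows "card {i\<in>A. \<not> P i} = card A - card {i\<in>A. P i}"
proof -
  have "{i\<in>A. \<not> P i} = A - {i\<in>A. P i}" by auto
  thus ?thesis using assms by (simp add: card_Diff_subset)
qed

lemma f22_card: "f22 n x = card {i\<in>{..<n div 2}. x!i}"
  unfolding f22_def by (simp add: Int_def)
lemma f11_card: "f11 n x = card {i\<in>{n div 2..<n}. x!i}"
  unfolding f11_def by (simp add: Int_def)

lemma f22_le: "f22 n x \<le> n div 2"
proof -
  have "card {i\<in>{..<n div 2}. x!i} \<le> card {..<n div 2}" by (rule card_mono) auto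
  thus ?thesis by (simp add: f22_card)
qed

lemma f11_le: "even n \<Longrightarrow> f11 n x \<le> n div 2"
proof -
  assume "even n"
  have "card {i\<in>{n div 2..<n}. x!i} \<le> card {n div 2..<n}" by (rule card_mono) auto
  thus ?thesis using \<open>even n\<close> by (simp add: f11_card) (auto elim!: evenE)
qed

lemma f12_eq: "even n \<Longrightarrow> f12 n x = f22 n x + (n div 2 - f11 n x)"
proof -
  assume e: "even n"
  have "(\<Sum>i\<in>{n div 2..<n}. of_bool (\<not> x ! i) :: nat) = card {i\<in>{n div 2..<n}. \<not> x!i}"
    by (simp add: Int_def)
  also have "\<dots> = card {n div 2..<n} - f11 n x"
    by (subst card_split_bool) (auto simp: f11_card)
  also have "card {n div 2..<n} = n div 2" using e by (auto elim!: evenE)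
  finally show ?thesis unfolding f12_def f22_def[symmetric] by simp
qed

lemma f21_eq: "even n \<Longrightarrow> f21 n x = (n div 2 - f22 n x) + f11 n x"
proof -
  assume e: "even n"
  have "(\<Sum>i\<in>{..<n div 2}. of_bool (\<not> x ! i) :: nat) = card {i\<in>{..<n div 2}. \<not> x!i}"
    by (simp add: Int_def)
  also have "\<dots> = n div 2 - f22 n x"
    by (subst card_split_bool) (auto simp: f22_card)
  finally show ?thesis unfolding f21_def f11_def[symmetric] by simp
qed

lemma AOAZ_eq: "even n \<Longrightarrow> AOAZ n x = (f11 n x, f22 n x + (n div 2 - f11 n x), (n div 2 - f22 n x) + f11 n x, f22 n x)"
  by (simp add: AOAZ_def f12_eq f21_eq)

lemma AOAZ_eq_iff: "even n \<Longrightarrow> AOAZ n x = AOAZ n y \<longleftrightarrow> f22 n x = f22 n y \<and> f11 n x = f11 n y"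
  using f11_le[of n x] f11_le[of n y] f22_le[of n x] f22_le[of n y]
  by (auto simp: AOAZ_eq)

lemma dominates_iff: "even n \<Longrightarrow> dominates n z x \<longleftrightarrow> f22 n x < f22 n z \<and> f22 n z + f11 n x = f22 n x + f11 n z"
  using f11_le[of n x] f11_le[of n z] f22_le[of n x] f22_le[of n z]
  by (auto simp: dominates_def weakly_geq_def AOAZ_eq)

lemma flip_nth: "i < length x \<Longrightarrow> flip x i ! j = (if j = i then \<not> x!i else x!j)"
  by (simp add: flip_def nth_list_update)

lemma length_flip[simp]: "length (flip x i) = length x"
  by (simp add: flip_def)

lemma card_flip_set:
  assumes "finite S" "i < length x"
  shows "card {j\<in>S. flip x i ! j} = (if i \<in> S then (if x!i then card {j\<in>S. x!j} - 1 else card {j\<in>S. x!j} + 1) else card {j\<in>S. x!j})"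
proof -
  have fin: "finite {j\<in>S. x!j}" using assms by simp
  show ?thesis
  proof (cases "i \<in> S")
    case True
    show ?thesis
    proof (cases "x!i")
      case True
      have "{j\<in>S. flip x i ! j} = {j\<in>S. x!j} - {i}" using assms True by (auto simp: flip_nth)
      thus ?thesis using \<open>i\<in>S\<close> True fin by simp
    next
      case False
      have "{j\<in>S. flip x i ! j} = insert i {j\<in>S. x!j}" using assms False \<open>i\<in>S\<close> by (auto simp: flip_nth)
      thus ?thesis using \<open>i\<in>S\<close> False fin by simp
    qed
  next
    case False
    have "{j\<in>S. flip x i ! j} = {j\<in>S. x!j}" using assms False by (auto simp: flip_nth)
    thus ?thesis using False by simp
  qed
qed

lemma f22_flip: "i < length x \<Longrightarrow> f22 n (flip x i) = (if i < n div 2 then (if x!i then f22 n x - 1 else f22 n x + 1) else f22 n x)"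
  unfolding f22_card by (subst card_flip_set) auto

lemma f11_flip: "i < length x \<Longrightarrow> f11 n (flip x i) = (if n div 2 \<le> i \<and> i < n then (if x!i then f11 n x - 1 else f11 n x + 1) else f11 n x)"
  unfolding f11_card by (subst card_flip_set) auto



definition Inv :: "nat \<Rightarrow> bool list set \<Rightarrow> bool" where
 "Inv n P \<longleftrightarrow> finite P \<and> P \<noteq> {} \<and> P \<subseteq> bitstrings n \<and> (\<forall>x\<in>P. \<forall>y\<in>P. AOAZ n x = AOAZ n y \<longrightarrow> x = y) \<and> (\<forall>x\<in>P. \<forall>y\<in>P. \<not> dominates n x y)"

definition cov :: "nat \<Rightarrow> bool list set \<Rightarrow> nat \<Rightarrow> nat \<Rightarrow> bool" where
 "cov n P a b \<longleftrightarrow> (\<exists>x\<in>P. f22 n x = a \<and> f11 n x = b)"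

lemma dominates_irrefl: "\<not> dominates n x x"
  by (simp add: dominates_def)

lemma upd_sub: "semo_update n P x' \<subseteq> insert x' P"
  by (auto simp: semo_update_def)

lemma upd_acc: "\<not>(\<exists>z\<in>P. dominates n z x' \<or> AOAZ n z = AOAZ n x') \<Longrightarrow> x' \<in> semo_update n P x'"
  by (auto simp: semo_update_def)

lemma upd_inv:
  assumes "Inv n P" "x' \<in> bitstrings n"
  shows "Inv n (semo_update n P x')"
proof (cases "\<exists>z\<in>P. dominates n z x' \<or> AOAZ n z = AOAZ n x'")
  case True
  thus ?thesis using assms by (simp add: semo_update_def)
next
  case False
  hence eq: "semo_update n P x' = {z\<in>P. \<not> dominates n x' z} \<union> {x'}" by (simp add: semo_update_def)
  show ?thesis unfolding eq Inv_def
    using assms False by (auto simp: Inv_def dominates_irrefl)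
qed

lemma upd_mono:
  assumes "even n" "z \<in> P"
  shows "\<exists>z'\<in>semo_update n P x'. f22 n z \<le> f22 n z' \<and> f22 n z' + f11 n z = f22 n z + f11 n z'"
proof (cases "\<exists>z\<in>P. dominates n z x' \<or> AOAZ n z = AOAZ n x'")
  case True
  thus ?thesis using assms by (auto simp: semo_update_def)
next
  case False
  hence eq: "semo_update n P x' = {z\<in>P. \<not> dominates n x' z} \<union> {x'}" by (simp add: semo_update_def)
  show ?thesis
  proof (cases "dominates n x' z")
    case True
    thus ?thesis using assms by (auto simp: eq dominates_iff)
  next
    case False
    thus ?thesis using assms by (auto simp: eq)
  qed
qed

lemma pareto_persist:
  assumes "even n" "cov n P a b" "a = n div 2 \<or> b = n div 2"
  shows "cov n (semo_update n P x') a b"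
proof -
  obtain z where z: "z \<in> P" "f22 n z = a" "f11 n z = b" using assms(2) by (auto simp: cov_def)
  obtain z' where z': "z' \<in> semo_update n P x'" "f22 n z \<le> f22 n z'" "f22 n z' + f11 n z = f22 n z + f11 n z'"
    using upd_mono[OF assms(1) z(1)] by blast
  have "f22 n z' \<le> n div 2" "f11 n z' \<le> n div 2" using f22_le f11_le assms(1) by auto
  hence "f22 n z' = a \<and> f11 n z' = b" using z z' assms(3) by linarith
  thus ?thesis using z' by (auto simp: cov_def)
qed

lemma card_bound:
  assumes "Inv n P" "even n"
  shows "card P \<le> n + 1"
proof -
  let ?m = "n div 2"
  let ?h = "\<lambda>z. f22 n z + (?m - f11 n z)"
  have inj: "inj_on ?h P"
  proof (rule inj_onI)
    fix z y assume zy: "z \<in> P" "y \<in> P" "?h z = ?h y"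
    have b: "f11 n z \<le> ?m" "f11 n y \<le> ?m" using f11_le assms(2) by auto
    have d: "f22 n z + f11 n y = f22 n y + f11 n z" using zy(3) b by linarith
    show "z = y"
    proof (cases "f22 n z = f22 n y")
      case True
      hence "AOAZ n z = AOAZ n y" using d assms(2) by (simp add: AOAZ_eq_iff)
      thus ?thesis using assms(1) zy by (auto simp: Inv_def)
    next
      case False
      hence "dominates n z y \<or> dominates n y z" using d assms(2) by (auto simp: dominates_iff)
      thus ?thesis using assms(1) zy by (auto simp: Inv_def)
    qed
  qed
  have "?h z \<le> 2 * ?m" for z using f22_le[of n z] by linarith
  hence "?h ` P \<subseteq> {..2 * ?m}" by auto
  hence "card P \<le> card {..2 * ?m}" using card_inj_on_le[OF inj] by blast
  thus ?thesis using assms(2) by auto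
qed

lemma exists_idx:
  assumes "finite S" "card {i\<in>S. x!i} < card S"
  shows "\<exists>i\<in>S. \<not> x!i"
proof -
  have "card {i\<in>S. \<not> x!i} > 0" using assms card_split_bool[of S "\<lambda>i. x!i"] by simp
  hence "{i\<in>S. \<not> x!i} \<noteq> {}" by (metis card.empty less_irrefl)
  thus ?thesis by auto
qed

lemma nondom_pareto:
  assumes "even n" "x \<in> bitstrings n" "f22 n x < n div 2" "f11 n x < n div 2"
  shows "\<exists>z\<in>bitstrings n. dominates n z x"
proof -
  have len: "length x = n" using assms(2) by (simp add: bitstrings_def)
  have c1: "card {..<n div 2} = n div 2" by simp
  have c2: "card {n div 2..<n} = n div 2" using assms(1) by (auto elim!: evenE)
  obtain i where i: "i < n div 2" "\<not> x!i" using exists_idx[of "{..<n div 2}" x] assms(3) c1 by (auto simp: f22_card)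
  obtain j where j: "n div 2 \<le> j" "j < n" "\<not> x!j" using exists_idx[of "{n div 2..<n}" x] assms(4) c2 by (auto simp: f11_card)
  define y where "y = flip x i"
  have ly: "length y = n" using len by (simp add: y_def)
  have y1: "f22 n y = f22 n x + 1" "f11 n y = f11 n x" using i len by (auto simp: y_def f22_flip f11_flip)
  have yj: "\<not> y!j" using i j len by (auto simp: y_def flip_nth)
  define z where "z = flip y j"
  have z1: "f22 n z = f22 n x + 1" "f11 n z = f11 n x + 1" using j ly y1 yj by (auto simp: z_def f22_flip f11_flip)
  have "z \<in> bitstrings n" using ly by (simp add: z_def bitstrings_def)
  moreover have "dominates n z x" using z1 assms(1) by (simp add: dominates_iff)
  ultimately show ?thesis by blast
qed

lemma covers_if:
  assumes "even n" "\<forall>j\<le>n div 2. cov n P (n div 2) j" "\<forall>j\<le>n div 2. cov n P j (n div 2)"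
  shows "covers_front n P"
  unfolding covers_front_def pareto_front_def
proof (rule subsetI)
  fix v assume "v \<in> {AOAZ n x |x. x \<in> bitstrings n \<and> \<not> (\<exists>z\<in>bitstrings n. dominates n z x)}"
  then obtain x where x: "x \<in> bitstrings n" "\<not> (\<exists>z\<in>bitstrings n. dominates n z x)" and v: "v = AOAZ n x" by blast
  have "f22 n x = n div 2 \<or> f11 n x = n div 2"
    using nondom_pareto[OF assms(1) x(1)] x(2) f22_le[of n x] f11_le[OF assms(1), of x] by linarith
  hence "cov n P (f22 n x) (f11 n x)" using assms f22_le[of n x] f11_le[OF assms(1), of x] by auto
  then obtain y where "y \<in> P" "f22 n y = f22 n x" "f11 n y = f11 n x" by (auto simp: cov_def)
  thus "v \<in> AOAZ n ` P" using assms(1) v by (metis AOAZ_eq_iff image_eqI)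
qed



definition Aq :: "nat \<Rightarrow> bool list set \<Rightarrow> nat" where "Aq n P = Max (f22 n ` P)"
definition Bq :: "nat \<Rightarrow> bool list set \<Rightarrow> nat" where "Bq n P = Max (f11 n ` {x\<in>P. f22 n x = n div 2})"
definition Lq :: "nat \<Rightarrow> bool list set \<Rightarrow> nat" where
  "Lq n P = (LEAST l. \<forall>j. l \<le> j \<and> j \<le> n div 2 \<longrightarrow> cov n P (n div 2) j)"
definition Kq :: "nat \<Rightarrow> bool list set \<Rightarrow> nat" where
  "Kq n P = (LEAST k. \<forall>j. k \<le> j \<and> j \<le> n div 2 \<longrightarrow> cov n P j (n div 2))"
definition phi :: "nat \<Rightarrow> bool list set \<Rightarrow> nat" where
  "phi n P = (if covers_front n P then 4 * (n div 2)
     else if Aq n P < n div 2 then Aq n P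
     else if \<not> cov n P (n div 2) (n div 2) then n div 2 + Bq n P
     else if 0 < Lq n P then 3 * (n div 2) - Lq n P
     else 4 * (n div 2) - Kq n P)"

lemma Aq_ge: "finite P \<Longrightarrow> x \<in> P \<Longrightarrow> f22 n x \<le> Aq n P"
  unfolding Aq_def by simp
lemma Aq_ex: "finite P \<Longrightarrow> P \<noteq> {} \<Longrightarrow> \<exists>x\<in>P. f22 n x = Aq n P"
proof -
  assume "finite P" "P \<noteq> {}"
  hence "Aq n P \<in> f22 n ` P" unfolding Aq_def by (intro Max_in) auto
  thus ?thesis by auto
qed
lemma Aq_le: "finite P \<Longrightarrow> P \<noteq> {} \<Longrightarrow> Aq n P \<le> n div 2"
proof -
  assume "finite P" "P \<noteq> {}"
  then obtain x where "x \<in> P" "f22 n x = Aq n P" using Aq_ex by blast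
  thus ?thesis using f22_le[of n x] by simp
qed
lemma Aq_cov: "finite P \<Longrightarrow> cov n P (n div 2) b \<Longrightarrow> Aq n P = n div 2"
proof -
  assume a: "finite P" "cov n P (n div 2) b"
  then obtain x where x: "x \<in> P" "f22 n x = n div 2" by (auto simp: cov_def)
  have "Aq n P \<le> n div 2" using Aq_le a(1) x(1) by blast
  moreover have "f22 n x \<le> Aq n P" using Aq_ge a(1) x(1) by blast
  ultimately show ?thesis using x by simp
qed

lemma Bq_ge: "finite P \<Longrightarrow> x \<in> P \<Longrightarrow> f22 n x = n div 2 \<Longrightarrow> f11 n x \<le> Bq n P"
  unfolding Bq_def by simp
lemma Bq_ex: "finite P \<Longrightarrow> P \<noteq> {} \<Longrightarrow> Aq n P = n div 2 \<Longrightarrow> \<exists>x\<in>P. f22 n x = n div 2 \<and> f11 n x = Bq n P"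
proof -
  assume a: "finite P" "P \<noteq> {}" "Aq n P = n div 2"
  then obtain x where "x \<in> P" "f22 n x = n div 2" using Aq_ex by metis
  hence ne: "{x\<in>P. f22 n x = n div 2} \<noteq> {}" by auto
  have "Bq n P \<in> f11 n ` {x\<in>P. f22 n x = n div 2}"
    unfolding Bq_def using a ne by (intro Max_in) auto
  thus ?thesis by auto
qed

lemma Lq_props:
  assumes "cov n P (n div 2) (n div 2)"
  shows "Lq n P \<le> n div 2" "\<And>j. Lq n P \<le> j \<Longrightarrow> j \<le> n div 2 \<Longrightarrow> cov n P (n div 2) j"
    "0 < Lq n P \<Longrightarrow> \<not> cov n P (n div 2) (Lq n P - 1)"
proof -
  let ?Q = "\<lambda>l. \<forall>j. l \<le> j \<and> j \<le> n div 2 \<longrightarrow> cov n P (n div 2) j"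
  have q: "?Q (n div 2)" using assms by (metis le_antisym)
  show "Lq n P \<le> n div 2" unfolding Lq_def using q by (rule Least_le)
  have ql: "?Q (Lq n P)" unfolding Lq_def using q by (rule LeastI)
  thus "\<And>j. Lq n P \<le> j \<Longrightarrow> j \<le> n div 2 \<Longrightarrow> cov n P (n div 2) j" by blast
  show "\<not> cov n P (n div 2) (Lq n P - 1)" if "0 < Lq n P"
  proof
    assume c: "cov n P (n div 2) (Lq n P - 1)"
    have "?Q (Lq n P - 1)"
    proof (intro allI impI)
      fix j assume j: "Lq n P - 1 \<le> j \<and> j \<le> n div 2"
      show "cov n P (n div 2) j"
      proof (cases "j = Lq n P - 1")
        case True thus ?thesis using c by simp
      next
        case False hence "Lq n P \<le> j" using j by linarith
        thus ?thesis using ql j by blast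
      qed
    qed
    hence "Lq n P \<le> Lq n P - 1" unfolding Lq_def by (rule Least_le)
    thus False using that by simp
  qed
qed

lemma Lq_le: "(\<And>j. l \<le> j \<Longrightarrow> j \<le> n div 2 \<Longrightarrow> cov n P (n div 2) j) \<Longrightarrow> Lq n P \<le> l"
  unfolding Lq_def by (rule Least_le) blast

lemma Kq_props:
  assumes "cov n P (n div 2) (n div 2)"
  shows "Kq n P \<le> n div 2" "\<And>j. Kq n P \<le> j \<Longrightarrow> j \<le> n div 2 \<Longrightarrow> cov n P j (n div 2)"
    "0 < Kq n P \<Longrightarrow> \<not> cov n P (Kq n P - 1) (n div 2)"
proof -
  let ?Q = "\<lambda>l. \<forall>j. l \<le> j \<and> j \<le> n div 2 \<longrightarrow> cov n P j (n div 2)"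
  have q: "?Q (n div 2)" using assms by (metis le_antisym)
  show "Kq n P \<le> n div 2" unfolding Kq_def using q by (rule Least_le)
  have ql: "?Q (Kq n P)" unfolding Kq_def using q by (rule LeastI)
  thus "\<And>j. Kq n P \<le> j \<Longrightarrow> j \<le> n div 2 \<Longrightarrow> cov n P j (n div 2)" by blast
  show "\<not> cov n P (Kq n P - 1) (n div 2)" if "0 < Kq n P"
  proof
    assume c: "cov n P (Kq n P - 1) (n div 2)"
    have "?Q (Kq n P - 1)"
    proof (intro allI impI)
      fix j assume j: "Kq n P - 1 \<le> j \<and> j \<le> n div 2"
      show "cov n P j (n div 2)"
      proof (cases "j = Kq n P - 1")
        case True thus ?thesis using c by simp
      next
        case False hence "Kq n P \<le> j" using j by linarith
        thus ?thesis using ql j by blast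
      qed
    qed
    hence "Kq n P \<le> Kq n P - 1" unfolding Kq_def by (rule Least_le)
    thus False using that by simp
  qed
qed

lemma Kq_le: "(\<And>j. l \<le> j \<Longrightarrow> j \<le> n div 2 \<Longrightarrow> cov n P j (n div 2)) \<Longrightarrow> Kq n P \<le> l"
  unfolding Kq_def by (rule Least_le) blast

lemma covers_LK:
  assumes "even n" "cov n P (n div 2) (n div 2)" "Lq n P = 0" "Kq n P = 0"
  shows "covers_front n P"
  using covers_if[OF assms(1)] Lq_props(2)[OF assms(2)] Kq_props(2)[OF assms(2)] assms(3,4) by simp

lemma acc_gen:
  assumes "even n" "\<forall>z\<in>P. \<not>(f22 n x' < f22 n z \<and> f22 n z + f11 n x' = f22 n x' + f11 n z) \<and> \<not>(f22 n z = f22 n x' \<and> f11 n z = f11 n x')"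
  shows "x' \<in> semo_update n P x'"
  using assms by (intro upd_acc) (auto simp: dominates_iff AOAZ_eq_iff)




lemma Inv_fin: "Inv n P \<Longrightarrow> finite P" and Inv_ne: "Inv n P \<Longrightarrow> P \<noteq> {}"
  by (auto simp: Inv_def)

lemma phi_cov: "covers_front n P \<Longrightarrow> phi n P = 4 * (n div 2)"
  by (simp add: phi_def)

lemma phi1: "\<not> covers_front n P \<Longrightarrow> Aq n P < n div 2 \<Longrightarrow> phi n P = Aq n P"
  by (simp add: phi_def)

lemma phi2: assumes "Inv n P" "even n" "\<not> covers_front n P" "Aq n P = n div 2" "\<not> cov n P (n div 2) (n div 2)"
  shows "phi n P = n div 2 + Bq n P" "Bq n P < n div 2"
proof -
  show "phi n P = n div 2 + Bq n P" using assms by (simp add: phi_def)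
  obtain x where x: "x \<in> P" "f22 n x = n div 2" "f11 n x = Bq n P"
    using Bq_ex assms Inv_fin Inv_ne by metis
  have "Bq n P \<noteq> n div 2" using x assms(5) by (auto simp: cov_def)
  moreover have "Bq n P \<le> n div 2" using x(3) f11_le[of n x] assms(2) by simp
  ultimately show "Bq n P < n div 2" by simp
qed

lemma phi3: assumes "finite P" "\<not> covers_front n P" "cov n P (n div 2) (n div 2)" "0 < Lq n P"
  shows "phi n P = 3 * (n div 2) - Lq n P" "Lq n P \<le> n div 2"
  using assms Aq_cov[OF assms(1,3)] Lq_props(1)[OF assms(3)]
  by (auto simp: phi_def)

lemma phi4: assumes "finite P" "even n" "\<not> covers_front n P" "cov n P (n div 2) (n div 2)" "Lq n P = 0"
  shows "phi n P = 4 * (n div 2) - Kq n P" "Kq n P \<le> n div 2" "0 < Kq n P"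
  using assms Aq_cov[OF assms(1,4)] Kq_props(1)[OF assms(4)] covers_LK[OF assms(2,4,5)]
  by (auto simp: phi_def)

lemma phi_mono:
  assumes I: "Inv n P" and e: "even n" and nc: "\<not> covers_front n P" and xb: "x' \<in> bitstrings n"
  shows "phi n P \<le> phi n (semo_update n P x')"
proof -
  define P' where "P' = semo_update n P x'"
  define m where "m = n div 2"
  have I': "Inv n P'" using upd_inv[OF I xb] by (simp add: P'_def)
  have f: "finite P" "P \<noteq> {}" "finite P'" "P' \<noteq> {}" using I I' by (auto simp: Inv_def)
  have A: "Aq n P \<le> Aq n P'"
  proof -
    obtain z where z: "z \<in> P" "f22 n z = Aq n P" using Aq_ex f by metis
    obtain z' where z': "z' \<in> P'" "f22 n z \<le> f22 n z'" using upd_mono[OF e z(1)] P'_def by blast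
    have "f22 n z' \<le> Aq n P'" using Aq_ge[OF f(3) z'(1)] .
    thus ?thesis using z z' by linarith
  qed
  have Am: "Aq n P' \<le> m" "Aq n P \<le> m" using Aq_le f m_def by auto
  have B: "Bq n P \<le> Bq n P' \<and> Aq n P' = m" if Aeq: "Aq n P = m"
  proof -
    obtain z where z: "z \<in> P" "f22 n z = n div 2" "f11 n z = Bq n P"
      using Bq_ex[OF f(1,2), of n] Aeq unfolding m_def by blast
    have c0: "cov n P (n div 2) (Bq n P)" using z unfolding cov_def by blast
    have c1: "cov n P' (n div 2) (Bq n P)" using pareto_persist[OF e c0] unfolding P'_def by simp
    then obtain y where y: "y \<in> P'" "f22 n y = n div 2" "f11 n y = Bq n P" unfolding cov_def by blast
    have "Bq n P \<le> Bq n P'" using Bq_ge[OF f(3) y(1) y(2)] y(3) by simp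
    moreover have "Aq n P' = m" using Aq_cov[OF f(3) c1] m_def by simp
    ultimately show ?thesis by simp
  qed
  have C: "cov n P' m m \<and> Lq n P' \<le> Lq n P \<and> Kq n P' \<le> Kq n P" if cm: "cov n P m m"
  proof -
    have "cov n P' m m" using pareto_persist[OF e cm[unfolded m_def]] P'_def m_def by simp
    moreover have "Lq n P' \<le> Lq n P"
      by (rule Lq_le) (use Lq_props(2)[OF cm[unfolded m_def]] pareto_persist[OF e] in \<open>auto simp: P'_def\<close>)
    moreover have "Kq n P' \<le> Kq n P"
      by (rule Kq_le) (use Kq_props(2)[OF cm[unfolded m_def]] pareto_persist[OF e] in \<open>auto simp: P'_def\<close>)
    ultimately show ?thesis by blast
  qed
  show ?thesis
  proof (cases "covers_front n P'")
    case True
    hence "phi n P' = 4 * m" using phi_cov m_def P'_def by simp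
    moreover have "phi n P \<le> 4 * m"
    proof (cases "Aq n P < m")
      case True thus ?thesis using phi1[OF nc] Am m_def by simp
    next
      case False
      hence Aeq: "Aq n P = m" using Am by simp
      show ?thesis
      proof (cases "cov n P m m")
        case False thus ?thesis using phi2[OF I e nc] Aeq m_def by simp
      next
        case cm: True
        show ?thesis
        proof (cases "0 < Lq n P")
          case True thus ?thesis using phi3[OF f(1) nc] cm m_def by simp
        next
          case False thus ?thesis using phi4[OF f(1) e nc] cm m_def by simp
        qed
      qed
    qed
    ultimately show ?thesis using P'_def by simp
  next
    case nc': False
    have low: "m \<le> phi n P'" if "Aq n P' = m"
    proof (cases "cov n P' m m")
      case False thus ?thesis using phi2[OF I' e nc'] that m_def by simp
    next
      case cm: True
      show ?thesis
      proof (cases "0 < Lq n P'")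
        case True thus ?thesis using phi3[OF f(3) nc'] cm m_def by simp
      next
        case False thus ?thesis using phi4[OF f(3) e nc'] cm m_def by simp
      qed
    qed
    have low2: "2 * m \<le> phi n P'" if cm: "cov n P' m m"
    proof (cases "0 < Lq n P'")
      case True thus ?thesis using phi3[OF f(3) nc'] cm m_def by simp
    next
      case False thus ?thesis using phi4[OF f(3) e nc'] cm m_def by simp
    qed
    show ?thesis
    proof (cases "Aq n P < m")
      case True
      show ?thesis
      proof (cases "Aq n P' < m")
        case True2: True thus ?thesis using phi1[OF nc True[unfolded m_def]] phi1[OF nc' True2[unfolded m_def]] A m_def P'_def by simp
      next
        case False
        hence "Aq n P' = m" using Am by simp
        thus ?thesis using low phi1[OF nc True[unfolded m_def]] True P'_def by simp
      qed
    next
      case False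
      hence Aeq: "Aq n P = m" using Am by simp
      obtain Bm: "Bq n P \<le> Bq n P'" "Aq n P' = m" using B[OF Aeq] by blast
      show ?thesis
      proof (cases "cov n P m m")
        case ncm: False
        have p: "phi n P = m + Bq n P" "Bq n P < m" using phi2[OF I e nc] Aeq ncm m_def by auto
        show ?thesis
        proof (cases "cov n P' m m")
          case False thus ?thesis using phi2[OF I' e nc'] Bm p m_def P'_def by simp
        next
          case True thus ?thesis using low2 p P'_def by simp
        qed
      next
        case cm: True
        obtain c': "cov n P' m m" "Lq n P' \<le> Lq n P" "Kq n P' \<le> Kq n P" using C[OF cm] by blast
        show ?thesis
        proof (cases "0 < Lq n P")
          case True
          have p: "phi n P = 3 * m - Lq n P" "Lq n P \<le> m" using phi3[OF f(1) nc] cm True m_def by auto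
          show ?thesis
          proof (cases "0 < Lq n P'")
            case True thus ?thesis using phi3[OF f(3) nc'] c' p m_def P'_def by (simp add: diff_le_mono2)
          next
            case False
            have k: "phi n P' = 4 * m - Kq n P'" "Kq n P' \<le> m" using phi4[OF f(3) e nc'] c' False m_def by auto
            have "3 * m - Lq n P \<le> 3 * m" by simp
            also have "3 * m \<le> 4 * m - Kq n P'" using k(2) by simp
            finally show ?thesis using k(1) p(1) P'_def by simp
          qed
        next
          case False
          hence "Lq n P' = 0" using c' by simp
          thus ?thesis using phi4[OF f(3) e nc'] phi4[OF f(1) e nc] c' cm False m_def P'_def by (simp add: diff_le_mono2)
        qed
      qed
    qed
  qed
qed



lemma sub_lt: "(a::nat) \<le> M \<Longrightarrow> b < a \<Longrightarrow> M - a < M - b" by arith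

lemma sub_lt2: "0 < (L::nat) \<Longrightarrow> L \<le> m \<Longrightarrow> K \<le> m \<Longrightarrow> 3 * m - L < 4 * m - K" by arith

lemma phi_low1: assumes "Inv n P" "even n" "\<not> covers_front n P" "Aq n P = n div 2"
  shows "n div 2 \<le> phi n P"
proof (cases "cov n P (n div 2) (n div 2)")
  case False thus ?thesis using phi2[OF assms(1,2,3,4)] by simp
next
  case cm: True
  have f: "finite P" using assms(1) by (rule Inv_fin)
  show ?thesis
  proof (cases "0 < Lq n P")
    case True thus ?thesis using phi3[OF f assms(3) cm] by simp
  next
    case False thus ?thesis using phi4[OF f assms(2,3) cm] by simp
  qed
qed

lemma phi_low2: assumes "Inv n P" "even n" "\<not> covers_front n P" "cov n P (n div 2) (n div 2)"
  shows "2 * (n div 2) \<le> phi n P"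
proof -
  have f: "finite P" using assms(1) by (rule Inv_fin)
  show ?thesis
  proof (cases "0 < Lq n P")
    case True thus ?thesis using phi3[OF f assms(3,4)] by simp
  next
    case False thus ?thesis using phi4[OF f assms(2,3,4)] by simp
  qed
qed

lemma len_of: "Inv n P \<Longrightarrow> x \<in> P \<Longrightarrow> length x = n"
  by (auto simp: Inv_def bitstrings_def)

lemma flip_bits: "Inv n P \<Longrightarrow> x \<in> P \<Longrightarrow> flip x i \<in> bitstrings n"
  using len_of by (auto simp: bitstrings_def)

lemma card_half1: "card {i\<in>{..<n div 2}. \<not> x!i} = n div 2 - f22 n x"
  by (subst card_split_bool) (auto simp: f22_card)

lemma card_half2: "even n \<Longrightarrow> card {i\<in>{n div 2..<n}. \<not> x!i} = n div 2 - f11 n x"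
  by (subst card_split_bool) (auto simp: f11_card elim!: evenE)

lemma prog1:
  assumes I: "Inv n P" and e: "even n" and nc: "\<not> covers_front n P" and lt: "Aq n P < n div 2"
  shows "\<exists>x\<in>P. \<exists>J\<subseteq>{..<n}. card J = n div 2 - Aq n P \<and> (\<forall>i\<in>J. phi n P < phi n (semo_update n P (flip x i)))"
proof -
  have f: "finite P" "P \<noteq> {}" using I by (auto simp: Inv_def)
  obtain x where x: "x \<in> P" "f22 n x = Aq n P" using Aq_ex[OF f] by blast
  have len: "length x = n" using len_of[OF I x(1)] .
  define J where "J = {i\<in>{..<n div 2}. \<not> x!i}"
  have cJ: "card J = n div 2 - Aq n P" using card_half1[of n x] x(2) by (simp add: J_def)
  have JS: "J \<subseteq> {..<n}" by (auto simp: J_def)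
  have "phi n P < phi n (semo_update n P (flip x i))" if i: "i \<in> J" for i
  proof -
    define x' where "x' = flip x i"
    define P' where "P' = semo_update n P x'"
    have il: "i < n div 2" "\<not> x!i" "i < length x" using i len by (auto simp: J_def)
    have x'v: "f22 n x' = Aq n P + 1" using il x(2) by (simp add: x'_def f22_flip)
    have acc: "x' \<in> P'" unfolding P'_def
    proof (rule acc_gen[OF e], intro ballI conjI notI)
      fix z assume "z \<in> P" "f22 n x' < f22 n z \<and> f22 n z + f11 n x' = f22 n x' + f11 n z"
      thus False using Aq_ge[OF f(1), of z n] x'v by simp
    next
      fix z assume "z \<in> P" "f22 n z = f22 n x' \<and> f11 n z = f11 n x'"
      thus False using Aq_ge[OF f(1), of z n] x'v by simp
    qed
    have I': "Inv n P'" unfolding P'_def x'_def using upd_inv[OF I flip_bits[OF I x(1)]] .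
    have f': "finite P'" using I' by (rule Inv_fin)
    have A': "Aq n P + 1 \<le> Aq n P'" using Aq_ge[OF f' acc, of n] x'v by simp
    have "phi n P < phi n P'"
    proof (cases "covers_front n P'")
      case True thus ?thesis using phi_cov phi1[OF nc lt] lt by simp
    next
      case nc': False
      show ?thesis
      proof (cases "Aq n P' < n div 2")
        case True thus ?thesis using phi1[OF nc' True] phi1[OF nc lt] A' by simp
      next
        case False
        hence "Aq n P' = n div 2" using Aq_le[OF f' Inv_ne[OF I'], of n] by simp
        thus ?thesis using phi_low1[OF I' e nc'] phi1[OF nc lt] lt by simp
      qed
    qed
    thus ?thesis by (simp add: P'_def x'_def)
  qed
  thus ?thesis using x(1) JS cJ by blast
qed

lemma prog2:
  assumes I: "Inv n P" and e: "even n" and nc: "\<not> covers_front n P" and Aeq: "Aq n P = n div 2"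
    and ncm: "\<not> cov n P (n div 2) (n div 2)"
  shows "\<exists>x\<in>P. \<exists>J\<subseteq>{..<n}. card J = n div 2 - Bq n P \<and> (\<forall>i\<in>J. phi n P < phi n (semo_update n P (flip x i)))"
proof -
  have f: "finite P" "P \<noteq> {}" using I by (auto simp: Inv_def)
  obtain x where x: "x \<in> P" "f22 n x = n div 2" "f11 n x = Bq n P" using Bq_ex[OF f Aeq] by blast
  have p: "phi n P = n div 2 + Bq n P" "Bq n P < n div 2" using phi2[OF I e nc Aeq ncm] by auto
  have len: "length x = n" using len_of[OF I x(1)] .
  define J where "J = {i\<in>{n div 2..<n}. \<not> x!i}"
  have cJ: "card J = n div 2 - Bq n P" using card_half2[OF e, of x] x(3) by (simp add: J_def)
  have JS: "J \<subseteq> {..<n}" by (auto simp: J_def)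
  have "phi n P < phi n (semo_update n P (flip x i))" if i: "i \<in> J" for i
  proof -
    define x' where "x' = flip x i"
    define P' where "P' = semo_update n P x'"
    have il: "n div 2 \<le> i" "i < n" "\<not> x!i" "i < length x" using i len by (auto simp: J_def)
    have x'v: "f22 n x' = n div 2" "f11 n x' = Bq n P + 1" using il x(2,3) by (auto simp: x'_def f22_flip f11_flip)
    have acc: "x' \<in> P'" unfolding P'_def
    proof (rule acc_gen[OF e], intro ballI conjI notI)
      fix z assume "z \<in> P" "f22 n x' < f22 n z \<and> f22 n z + f11 n x' = f22 n x' + f11 n z"
      thus False using f22_le[of n z] x'v by simp
    next
      fix z assume "z \<in> P" "f22 n z = f22 n x' \<and> f11 n z = f11 n x'"
      thus False using Bq_ge[OF f(1), of z n] x'v by simp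
    qed
    have I': "Inv n P'" unfolding P'_def x'_def using upd_inv[OF I flip_bits[OF I x(1)]] .
    have f': "finite P'" using I' by (rule Inv_fin)
    have c': "cov n P' (n div 2) (Bq n P + 1)" using acc x'v by (auto simp: cov_def)
    have "phi n P < phi n P'"
    proof (cases "covers_front n P'")
      case True thus ?thesis using phi_cov p by simp
    next
      case nc': False
      show ?thesis
      proof (cases "cov n P' (n div 2) (n div 2)")
        case True thus ?thesis using phi_low2[OF I' e nc' True] p by simp
      next
        case False
        have A': "Aq n P' = n div 2" using Aq_cov[OF f' c'] .
        have "Bq n P + 1 \<le> Bq n P'" using Bq_ge[OF f' acc x'v(1)] x'v(2) by simp
        thus ?thesis using phi2[OF I' e nc' A' False] p by simp
      qed
    qed
    thus ?thesis by (simp add: P'_def x'_def)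
  qed
  thus ?thesis using x(1) JS cJ by blast
qed

lemma prog3:
  assumes I: "Inv n P" and e: "even n" and nc: "\<not> covers_front n P"
    and cm: "cov n P (n div 2) (n div 2)" and L0: "0 < Lq n P"
  shows "\<exists>x\<in>P. \<exists>J\<subseteq>{..<n}. card J = Lq n P \<and> (\<forall>i\<in>J. phi n P < phi n (semo_update n P (flip x i)))"
proof -
  have f: "finite P" "P \<noteq> {}" using I by (auto simp: Inv_def)
  have p: "phi n P = 3 * (n div 2) - Lq n P" "Lq n P \<le> n div 2" using phi3[OF f(1) nc cm L0] by auto
  have "cov n P (n div 2) (Lq n P)" using Lq_props(2)[OF cm] p(2) by simp
  then obtain x where x: "x \<in> P" "f22 n x = n div 2" "f11 n x = Lq n P" by (auto simp: cov_def)
  have ncL: "\<not> cov n P (n div 2) (Lq n P - 1)" using Lq_props(3)[OF cm L0] .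
  have len: "length x = n" using len_of[OF I x(1)] .
  define J where "J = {i\<in>{n div 2..<n}. x!i}"
  have cJ: "card J = Lq n P" using x(3) by (simp add: J_def f11_card)
  have JS: "J \<subseteq> {..<n}" by (auto simp: J_def)
  have "phi n P < phi n (semo_update n P (flip x i))" if i: "i \<in> J" for i
  proof -
    define x' where "x' = flip x i"
    define P' where "P' = semo_update n P x'"
    have il: "n div 2 \<le> i" "i < n" "x!i" "i < length x" using i len by (auto simp: J_def)
    have x'v: "f22 n x' = n div 2" "f11 n x' = Lq n P - 1" using il x(2,3) by (auto simp: x'_def f22_flip f11_flip)
    have acc: "x' \<in> P'" unfolding P'_def
    proof (rule acc_gen[OF e], intro ballI conjI notI)
      fix z assume "z \<in> P" "f22 n x' < f22 n z \<and> f22 n z + f11 n x' = f22 n x' + f11 n z"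
      thus False using f22_le[of n z] x'v by simp
    next
      fix z assume "z \<in> P" "f22 n z = f22 n x' \<and> f11 n z = f11 n x'"
      thus False using ncL x'v by (auto simp: cov_def)
    qed
    have I': "Inv n P'" unfolding P'_def x'_def using upd_inv[OF I flip_bits[OF I x(1)]] .
    have f': "finite P'" using I' by (rule Inv_fin)
    have cm': "cov n P' (n div 2) (n div 2)" using pareto_persist[OF e cm] by (simp add: P'_def)
    have L': "Lq n P' \<le> Lq n P - 1"
    proof (rule Lq_le)
      fix j assume j: "Lq n P - 1 \<le> j" "j \<le> n div 2"
      show "cov n P' (n div 2) j"
      proof (cases "j = Lq n P - 1")
        case True thus ?thesis using acc x'v by (auto simp: cov_def)
      next
        case False
        hence "cov n P (n div 2) j" using Lq_props(2)[OF cm] j by simp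
        thus ?thesis using pareto_persist[OF e] by (simp add: P'_def)
      qed
    qed
    have "phi n P < phi n P'"
    proof (cases "covers_front n P'")
      case True thus ?thesis using phi_cov p L0 by simp
    next
      case nc': False
      show ?thesis
      proof (cases "0 < Lq n P'")
        case True thus ?thesis using phi3[OF f' nc' cm' True] p L' L0 by (simp, intro sub_lt; linarith)
      next
        case False thus ?thesis using phi4[OF f' e nc' cm'] p L0 sub_lt2 by simp
      qed
    qed
    thus ?thesis by (simp add: P'_def x'_def)
  qed
  thus ?thesis using x(1) JS cJ by blast
qed

lemma prog4:
  assumes I: "Inv n P" and e: "even n" and nc: "\<not> covers_front n P"
    and cm: "cov n P (n div 2) (n div 2)" and L0: "Lq n P = 0"
  shows "\<exists>x\<in>P. \<exists>J\<subseteq>{..<n}. card J = Kq n P \<and> (\<forall>i\<in>J. phi n P < phi n (semo_update n P (flip x i)))"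
proof -
  have f: "finite P" "P \<noteq> {}" using I by (auto simp: Inv_def)
  have p: "phi n P = 4 * (n div 2) - Kq n P" "Kq n P \<le> n div 2" "0 < Kq n P" using phi4[OF f(1) e nc cm L0] by auto
  have "cov n P (Kq n P) (n div 2)" using Kq_props(2)[OF cm] p(2) by simp
  then obtain x where x: "x \<in> P" "f22 n x = Kq n P" "f11 n x = n div 2" by (auto simp: cov_def)
  have ncK: "\<not> cov n P (Kq n P - 1) (n div 2)" using Kq_props(3)[OF cm p(3)] .
  have len: "length x = n" using len_of[OF I x(1)] .
  define J where "J = {i\<in>{..<n div 2}. x!i}"
  have cJ: "card J = Kq n P" using x(2) by (simp add: J_def f22_card)
  have JS: "J \<subseteq> {..<n}" by (auto simp: J_def)
  have "phi n P < phi n (semo_update n P (flip x i))" if i: "i \<in> J" for i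
  proof -
    define x' where "x' = flip x i"
    define P' where "P' = semo_update n P x'"
    have il: "i < n div 2" "x!i" "i < length x" using i len by (auto simp: J_def)
    have x'v: "f22 n x' = Kq n P - 1" "f11 n x' = n div 2" using il x(2,3) by (auto simp: x'_def f22_flip f11_flip)
    have acc: "x' \<in> P'" unfolding P'_def
    proof (rule acc_gen[OF e], intro ballI conjI notI)
      fix z assume "z \<in> P" "f22 n x' < f22 n z \<and> f22 n z + f11 n x' = f22 n x' + f11 n z"
      thus False using f11_le[OF e, of z] x'v by simp
    next
      fix z assume "z \<in> P" "f22 n z = f22 n x' \<and> f11 n z = f11 n x'"
      thus False using ncK x'v by (auto simp: cov_def)
    qed
    have I': "Inv n P'" unfolding P'_def x'_def using upd_inv[OF I flip_bits[OF I x(1)]] .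
    have f': "finite P'" using I' by (rule Inv_fin)
    have cm': "cov n P' (n div 2) (n div 2)" using pareto_persist[OF e cm] by (simp add: P'_def)
    have L': "Lq n P' = 0"
    proof -
      have "Lq n P' \<le> 0"
      proof (rule Lq_le)
        fix j assume j: "0 \<le> j" "j \<le> n div 2"
        hence "cov n P (n div 2) j" using Lq_props(2)[OF cm] L0 by simp
        thus "cov n P' (n div 2) j" using pareto_persist[OF e] by (simp add: P'_def)
      qed
      thus ?thesis by simp
    qed
    have K': "Kq n P' \<le> Kq n P - 1"
    proof (rule Kq_le)
      fix j assume j: "Kq n P - 1 \<le> j" "j \<le> n div 2"
      show "cov n P' j (n div 2)"
      proof (cases "j = Kq n P - 1")
        case True thus ?thesis using acc x'v by (auto simp: cov_def)
      next
        case False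
        hence "cov n P j (n div 2)" using Kq_props(2)[OF cm] j by simp
        thus ?thesis using pareto_persist[OF e] by (simp add: P'_def)
      qed
    qed
    have "phi n P < phi n P'"
    proof (cases "covers_front n P'")
      case True thus ?thesis using phi_cov p by simp
    next
      case nc': False
      thus ?thesis using phi4[OF f' e nc' cm' L'] p K' by (simp, intro sub_lt; linarith)
    qed
    thus ?thesis by (simp add: P'_def x'_def)
  qed
  thus ?thesis using x(1) JS cJ by blast
qed

lemma mod_qr: "r < (m::nat) \<Longrightarrow> (q * m + r) mod m = r"
  by simp

lemma progress:
  assumes I: "Inv n P" and e: "even n" and n0: "0 < n" and nc: "\<not> covers_front n P"
  shows "phi n P < 4 * (n div 2) \<and> (\<exists>x\<in>P. \<exists>J\<subseteq>{..<n}. card J = n div 2 - phi n P mod (n div 2) \<and>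
           (\<forall>i\<in>J. phi n P < phi n (semo_update n P (flip x i))))"
proof -
  have f: "finite P" "P \<noteq> {}" using I by (auto simp: Inv_def)
  have m0: "0 < n div 2" using e n0 by (auto elim!: evenE)
  show ?thesis
  proof (cases "Aq n P < n div 2")
    case True
    have "phi n P mod (n div 2) = Aq n P" using phi1[OF nc True] True by simp
    thus ?thesis using prog1[OF I e nc True] phi1[OF nc True] True by simp
  next
    case False
    hence Aeq: "Aq n P = n div 2" using Aq_le[OF f, of n] by simp
    show ?thesis
    proof (cases "cov n P (n div 2) (n div 2)")
      case False
      have p: "phi n P = n div 2 + Bq n P" "Bq n P < n div 2" using phi2[OF I e nc Aeq False] by auto
      have "phi n P mod (n div 2) = Bq n P" using p mod_qr[of "Bq n P" "n div 2" 1] by simp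
      thus ?thesis using prog2[OF I e nc Aeq False] p by simp
    next
      case cm: True
      show ?thesis
      proof (cases "0 < Lq n P")
        case True
        have p: "phi n P = 3 * (n div 2) - Lq n P" "Lq n P \<le> n div 2" using phi3[OF f(1) nc cm True] by auto
        have q: "phi n P = 2 * (n div 2) + (n div 2 - Lq n P)" using p by simp
        have "phi n P mod (n div 2) = n div 2 - Lq n P"
          unfolding q using mod_qr[of "n div 2 - Lq n P" "n div 2" 2] True m0 by simp
        moreover have "phi n P < 4 * (n div 2)" using p m0 by arith
        ultimately show ?thesis using prog3[OF I e nc cm True] p True by simp
      next
        case False
        hence L0: "Lq n P = 0" by simp
        have p: "phi n P = 4 * (n div 2) - Kq n P" "Kq n P \<le> n div 2" "0 < Kq n P" using phi4[OF f(1) e nc cm L0] by auto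
        have q: "phi n P = 3 * (n div 2) + (n div 2 - Kq n P)" using p by simp
        have "phi n P mod (n div 2) = n div 2 - Kq n P"
          unfolding q using mod_qr[of "n div 2 - Kq n P" "n div 2" 3] p m0 by simp
        thus ?thesis using prog4[OF I e nc cm L0] p by simp
      qed
    qed
  qed
qed



lemma drift:
  fixes X :: "nat \<Rightarrow> 's pmf" and K :: "'s \<Rightarrow> 's pmf" and g :: "'s \<Rightarrow> ennreal"
  assumes XS: "\<And>t. X (Suc t) = bind_pmf (X t) K"
  and I0: "\<And>s. s \<in> set_pmf (X 0) \<Longrightarrow> I s"
  and IK: "\<And>s s'. I s \<Longrightarrow> s' \<in> set_pmf (K s) \<Longrightarrow> I s'"
  and gC: "\<And>s. g s \<le> C"
  and dr: "\<And>s. I s \<Longrightarrow> (\<integral>\<^sup>+s'. g s' \<partial>K s) + (if F s then 0 else 1) \<le> g s"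
  shows "(\<Sum>t. ennreal (measure_pmf.prob (X t) {s. \<not> F s})) \<le> C"
proof -
  have It: "I s" if "s \<in> set_pmf (X t)" for t s
    using that
  proof (induction t arbitrary: s)
    case 0 thus ?case by (rule I0)
  next
    case (Suc t) thus ?case using IK by (auto simp: XS)
  qed
  define h where "h t = (\<integral>\<^sup>+s. g s \<partial>X t)" for t
  let ?A = "{s. \<not> F s}"
  have step: "h (Suc t) + ennreal (measure_pmf.prob (X t) ?A) \<le> h t" for t
  proof -
    have "h (Suc t) = (\<integral>\<^sup>+s. (\<integral>\<^sup>+s'. g s' \<partial>K s) \<partial>X t)" by (simp add: h_def XS)
    moreover have "ennreal (measure_pmf.prob (X t) ?A) = (\<integral>\<^sup>+s. indicator ?A s \<partial>X t)"
      by (simp add: measure_pmf.emeasure_eq_measure[symmetric])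
    ultimately have "h (Suc t) + ennreal (measure_pmf.prob (X t) ?A) = (\<integral>\<^sup>+s. (\<integral>\<^sup>+s'. g s' \<partial>K s) + indicator ?A s \<partial>X t)"
      by (simp add: nn_integral_add)
    also have "\<dots> \<le> (\<integral>\<^sup>+s. g s \<partial>X t)"
    proof (rule nn_integral_mono_AE, rule AE_pmfI)
      fix s assume "s \<in> set_pmf (X t)"
      hence "I s" by (rule It)
      thus "(\<integral>\<^sup>+s'. g s' \<partial>K s) + indicator ?A s \<le> g s" using dr[of s] by (cases "F s") (auto simp: indicator_def)
    qed
    finally show ?thesis by (simp add: h_def)
  qed
  have part: "(\<Sum>i<N. ennreal (measure_pmf.prob (X i) ?A)) + h N \<le> h 0" for N
  proof (induction N)
    case 0 thus ?case by simp
  next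
    case (Suc N)
    have "(\<Sum>i<Suc N. ennreal (measure_pmf.prob (X i) ?A)) + h (Suc N)
        = (\<Sum>i<N. ennreal (measure_pmf.prob (X i) ?A)) + (h (Suc N) + ennreal (measure_pmf.prob (X N) ?A))"
      by (simp add: algebra_simps)
    also have "\<dots> \<le> (\<Sum>i<N. ennreal (measure_pmf.prob (X i) ?A)) + h N"
      using step[of N] by (rule add_left_mono)
    also have "\<dots> \<le> h 0" by (rule Suc.IH)
    finally show ?case .
  qed
  have h0: "h 0 \<le> C"
  proof -
    have "h 0 \<le> (\<integral>\<^sup>+s. C \<partial>X 0)" unfolding h_def by (rule nn_integral_mono) (rule gC)
    also have "\<dots> = C" by (simp add: measure_pmf.emeasure_space_1)
    finally show ?thesis .
  qed
  have "(\<Sum>i<N. ennreal (measure_pmf.prob (X i) ?A)) \<le> C" for N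
  proof -
    have "(\<Sum>i<N. ennreal (measure_pmf.prob (X i) ?A)) \<le> (\<Sum>i<N. ennreal (measure_pmf.prob (X i) ?A)) + h N"
      by simp
    also have "\<dots> \<le> C" using part[of N] h0 by (rule order_trans)
    finally show ?thesis .
  qed
  thus ?thesis unfolding suminf_eq_SUP by (intro SUP_least) simp
qed

lemma step_prob:
  fixes f :: "'a \<Rightarrow> nat \<Rightarrow> 'b"
  assumes fin: "finite P" "P \<noteq> {}" and x0: "x0 \<in> P" and J: "J \<subseteq> {..<n}" and n0: "0 < n"
    and U: "\<And>i. i \<in> J \<Longrightarrow> f x0 i \<in> U"
  shows "ennreal (real (card J) / (real n * real (card P))) \<le>
    emeasure (measure_pmf (bind_pmf (pmf_of_set P) (\<lambda>x. bind_pmf (pmf_of_set {..<n}) (\<lambda>i. return_pmf (f x i))))) U"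
proof -
  have ne: "{..<n} \<noteq> {}" using n0 by auto
  let ?F = "\<lambda>x. (\<Sum>i<n. indicator U (f x i)) / ennreal (real n)"
  have e1: "emeasure (measure_pmf (bind_pmf (pmf_of_set P) (\<lambda>x. bind_pmf (pmf_of_set {..<n}) (\<lambda>i. return_pmf (f x i))))) U
      = (\<Sum>x\<in>P. ?F x) / ennreal (real (card P))"
    using fin ne by (simp add: nn_integral_pmf_of_set ennreal_of_nat_eq_real_of_nat)
  have e2: "?F x0 / ennreal (real (card P)) \<le> (\<Sum>x\<in>P. ?F x) / ennreal (real (card P))"
    by (intro divide_right_mono_ennreal member_le_sum x0) (auto simp: fin)
  have e3: "ennreal (real (card J)) / ennreal (real n) \<le> ?F x0"
  proof (intro divide_right_mono_ennreal)
    have "ennreal (real (card J)) = (\<Sum>i\<in>J. indicator U (f x0 i))" using U by (simp add: indicator_def ennreal_of_nat_eq_real_of_nat)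
    also have "\<dots> \<le> (\<Sum>i<n. indicator U (f x0 i))" by (intro sum_mono2 J) auto
    finally show "ennreal (real (card J)) \<le> (\<Sum>i<n. indicator U (f x0 i))" .
  qed
  have "(ennreal (real (card J)) / ennreal (real n)) / ennreal (real (card P)) \<le> emeasure (measure_pmf (bind_pmf (pmf_of_set P) (\<lambda>x. bind_pmf (pmf_of_set {..<n}) (\<lambda>i. return_pmf (f x i))))) U"
    unfolding e1 using divide_right_mono_ennreal[OF e3] e2 by (rule order_trans)
  moreover have "(ennreal (real (card J)) / ennreal (real n)) / ennreal (real (card P)) = ennreal (real (card J) / (real n * real (card P)))"
    using n0 fin by (simp add: divide_ennreal card_gt_0_iff)
  ultimately show ?thesis by simp
qed



definition cc :: "nat \<Rightarrow> nat \<Rightarrow> nat" where "cc n j = n div 2 - j mod (n div 2)"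
definition G :: "nat \<Rightarrow> nat \<Rightarrow> real" where
  "G n k = (\<Sum>j\<in>{k..<4 * (n div 2)}. real (n * (n + 1)) / real (cc n j))"

lemma G_nonneg: "0 \<le> G n k"
  unfolding G_def by (intro sum_nonneg) auto

lemma G_anti: "k \<le> k' \<Longrightarrow> G n k' \<le> G n k"
  unfolding G_def by (intro sum_mono2) auto

lemma G_step: "k < 4 * (n div 2) \<Longrightarrow> G n k = real (n * (n + 1)) / real (cc n k) + G n (Suc k)"
  unfolding G_def by (simp add: sum.atLeast_Suc_lessThan)

lemma semo_drift:
  assumes I: "Inv n P" and e: "even n" and n0: "0 < n"
  shows "(\<integral>\<^sup>+Q. ennreal (G n (phi n Q)) \<partial>semo_step n P) + (if covers_front n P then 0 else 1) \<le> ennreal (G n (phi n P))"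
proof (cases "covers_front n P")
  case True
  thus ?thesis by (simp add: semo_step_def)
next
  case nc: False
  define k where "k = phi n P"
  define m where "m = n div 2"
  have m0: "0 < m" using e n0 by (auto simp: m_def elim!: evenE)
  have f: "finite P" "P \<noteq> {}" using I by (auto simp: Inv_def)
  obtain x J where k4: "k < 4 * m" and x: "x \<in> P" and J: "J \<subseteq> {..<n}" and cJ: "card J = cc n k"
      and up: "\<And>i. i \<in> J \<Longrightarrow> k < phi n (semo_update n P (flip x i))"
    using progress[OF I e n0 nc] unfolding k_def[symmetric] m_def cc_def by blast
  have cpos: "0 < cc n k" unfolding cc_def using m0 m_def by simp
  define d where "d = real (n * (n + 1)) / real (cc n k)"
  define U where "U = {Q. k < phi n Q}"
  have stepdef: "semo_step n P = bind_pmf (pmf_of_set P) (\<lambda>x. bind_pmf (pmf_of_set {..<n}) (\<lambda>i. return_pmf (semo_update n P (flip x i))))"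
    using nc by (simp add: semo_step_def)
  have pr: "ennreal (real (card J) / (real n * real (card P))) \<le> emeasure (measure_pmf (semo_step n P)) U"
    unfolding stepdef by (rule step_prob[OF f x J n0]) (use up in \<open>auto simp: U_def\<close>)
  have cP: "card P \<le> n + 1" using card_bound[OF I e] .
  have cP0: "0 < card P" using f by (simp add: card_gt_0_iff)
  have "real (card J) / (real n * real (n + 1)) \<le> real (card J) / (real n * real (card P))"
    using cP cP0 n0 by (intro divide_left_mono mult_left_mono) auto
  hence pr2: "ennreal (real (cc n k) / (real n * real (n + 1))) \<le> emeasure (measure_pmf (semo_step n P)) U"
    using pr cJ by (metis ennreal_leI order_trans)
  have ab: "real n * real (n + 1) = real (n * (n + 1))" by (simp only: of_nat_mult)
  have a0: "real (n * (n + 1)) \<noteq> 0" "real (cc n k) \<noteq> 0" using n0 cpos by (simp only: of_nat_eq_0_iff mult_eq_0_iff; simp)+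
  have r: "d * (real (cc n k) / (real n * real (n + 1))) = 1"
    unfolding d_def ab using a0 by simp
  have d1: "ennreal d * ennreal (real (cc n k) / (real n * real (n + 1))) = 1"
  proof -
    have "0 \<le> d" by (simp add: d_def)
    hence "ennreal d * ennreal (real (cc n k) / (real n * real (n + 1))) = ennreal (d * (real (cc n k) / (real n * real (n + 1))))"
      by (rule ennreal_mult'[symmetric])
    also have "\<dots> = 1" by (simp only: r ennreal_1)
    finally show ?thesis .
  qed
  have one: "1 \<le> ennreal d * emeasure (measure_pmf (semo_step n P)) U"
    using mult_left_mono[OF pr2, of "ennreal d"] d1 by simp
  have pt: "ennreal (G n (phi n Q)) + ennreal d * indicator U Q \<le> ennreal (G n k)" if Q: "Q \<in> set_pmf (semo_step n P)" for Q
  proof -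
    obtain x' i where x': "x' \<in> P" "i < n" "Q = semo_update n P (flip x' i)"
    proof -
      have nen: "{..<n} \<noteq> {}" using n0 by auto
      show ?thesis using Q f nen that by (auto simp: stepdef)
    qed
    have ge: "k \<le> phi n Q" unfolding k_def x'(3) by (rule phi_mono[OF I e nc flip_bits[OF I x'(1)]])
    show ?thesis
    proof (cases "Q \<in> U")
      case True
      hence "Suc k \<le> phi n Q" by (simp add: U_def)
      hence "G n (phi n Q) \<le> G n (Suc k)" by (rule G_anti)
      hence "G n (phi n Q) + d \<le> G n k" using G_step[of k n] k4 m_def d_def by simp
      thus ?thesis using True G_nonneg[of n] d_def
        by (simp add: ennreal_plus[symmetric] del: ennreal_plus)
    next
      case False
      hence "phi n Q = k" using ge by (simp add: U_def)
      thus ?thesis using False by simp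
    qed
  qed
  have "(\<integral>\<^sup>+Q. ennreal (G n (phi n Q)) \<partial>semo_step n P) + 1
      \<le> (\<integral>\<^sup>+Q. ennreal (G n (phi n Q)) \<partial>semo_step n P) + ennreal d * emeasure (measure_pmf (semo_step n P)) U"
    using one by (rule add_left_mono)
  also have "\<dots> = (\<integral>\<^sup>+Q. ennreal (G n (phi n Q)) + ennreal d * indicator U Q \<partial>semo_step n P)"
    by (simp add: nn_integral_add nn_integral_cmult_indicator)
  also have "\<dots> \<le> (\<integral>\<^sup>+Q. ennreal (G n k) \<partial>semo_step n P)"
    by (rule nn_integral_mono_AE, rule AE_pmfI, rule pt)
  also have "\<dots> = ennreal (G n k)" by (simp add: measure_pmf.emeasure_space_1)
  finally show ?thesis using nc k_def by simp
qed



lemma sum_lessThan_add: "(\<Sum>j<a+b. h j) = (\<Sum>j<a. h j) + (\<Sum>j<b. h (a + j)) " for h :: "nat \<Rightarrow> real"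
  by (induction b) (simp_all add: add_ac)

lemma sum_blocks: "(\<Sum>j<q*m. h (j mod m)) = real q * (\<Sum>i<m. h i)" for h :: "nat \<Rightarrow> real"
proof (induction q)
  case 0 thus ?case by simp
next
  case (Suc q)
  have "(\<Sum>j<Suc q*m. h (j mod m)) = (\<Sum>j<q*m + m. h (j mod m))" by (simp add: add.commute)
  also have "\<dots> = (\<Sum>j<q*m. h (j mod m)) + (\<Sum>j<m. h ((q*m + j) mod m))" by (rule sum_lessThan_add)
  also have "(\<Sum>j<m. h ((q*m + j) mod m)) = (\<Sum>j<m. h j)" by (intro sum.cong) auto
  finally show ?case using Suc.IH by (simp add: algebra_simps)
qed

lemma sum_harm: "(\<Sum>i<m. 1 / real (m - i)) = (harm m :: real)"
proof -
  have "(\<Sum>i<m. 1 / real (m - i)) = (\<Sum>i<m. inverse (real (Suc (m - Suc i))))"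
    by (intro sum.cong) (auto simp: Suc_diff_Suc divide_inverse)
  also have "\<dots> = (\<Sum>i<m. inverse (real (Suc i)))"
    by (rule sum.nat_diff_reindex)
  finally show ?thesis by (simp add: harm_altdef)
qed

lemma harm_le_ln: "0 < m \<Longrightarrow> (harm m :: real) \<le> 1 + ln (real m)"
proof -
  assume "0 < m"
  have h1: "harm (Suc 0) = (1::real)" by (simp add: harm_def)
  show ?thesis using euler_mascheroni_sequence_decreasing[of 1 m] \<open>0 < m\<close> h1 by simp
qed

lemma G0_eq: assumes "even n" "0 < n" shows "G n 0 = 4 * real (n * (n + 1)) * harm (n div 2)"
proof -
  have sb: "(\<Sum>j<4 * (n div 2). 1 / real (n div 2 - j mod (n div 2))) = 4 * harm (n div 2)"
    using sum_blocks[where q=4 and m="n div 2" and h="\<lambda>i. 1 / real (n div 2 - i)"] sum_harm[of "n div 2"] by simp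
  have "G n 0 = (\<Sum>j<4 * (n div 2). real (n * (n + 1)) * (1 / real (n div 2 - j mod (n div 2))))"
    unfolding G_def cc_def atLeast0LessThan by (simp only: times_divide_eq_right mult_1_right)
  also have "\<dots> = real (n * (n + 1)) * (4 * harm (n div 2))"
    by (simp only: sum_distrib_left[symmetric] sb)
  finally show ?thesis by simp
qed

lemma G0_bound: assumes "even n" "3 \<le> n" shows "G n 0 \<le> 16 * (real n)^2 * ln (real n)"
proof -
  have m0: "0 < n div 2" using assms by auto
  have h: "harm (n div 2) \<le> 1 + ln (real n)"
  proof -
    have "ln (real (n div 2)) \<le> ln (real n)" using m0 by (subst ln_le_cancel_iff) auto
    thus ?thesis using harm_le_ln[OF m0] by simp
  qed
  have ln1: "1 \<le> ln (real n)"
  proof -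
    have "exp 1 \<le> real n" using exp_le assms(2) by linarith
    hence "ln (exp 1) \<le> ln (real n)" using assms(2) by (subst ln_le_cancel_iff) auto
    thus ?thesis by simp
  qed
  have hp: "0 \<le> (harm (n div 2) :: real)" by (rule harm_nonneg)
  have "G n 0 = 4 * real (n * (n + 1)) * harm (n div 2)" using G0_eq assms by simp
  also have "\<dots> \<le> 4 * (2 * (real n)^2) * (2 * ln (real n))"
  proof (rule mult_mono)
    show "4 * real (n * (n + 1)) \<le> 4 * (2 * (real n)^2)" using assms(2)
      by (simp add: power2_eq_square)
    show "harm (n div 2) \<le> 2 * ln (real n)" using h ln1 by simp
  qed (use hp in simp_all)
  finally show ?thesis by simp
qed

lemma bits_finite: "finite (bitstrings n)"
proof -
  have "finite {xs. set xs \<subseteq> (UNIV :: bool set) \<and> length xs = n}" by (rule finite_lists_length_eq) simp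
  thus ?thesis by (simp add: bitstrings_def)
qed

lemma bits_ne: "bitstrings n \<noteq> {}"
proof -
  have "replicate n False \<in> bitstrings n" by (simp add: bitstrings_def)
  thus ?thesis by blast
qed

lemma runtime_G:
  assumes e: "even n" and n0: "0 < n"
  shows "semo_expected_runtime n \<le> ennreal (G n 0)"
  unfolding semo_expected_runtime_def
proof (rule drift[where K = "semo_step n" and I = "Inv n" and g = "\<lambda>P. ennreal (G n (phi n P))"])
  show "\<And>t. semo_pop n (Suc t) = semo_pop n t \<bind> semo_step n" by simp
  show "Inv n s" if "s \<in> set_pmf (semo_pop n 0)" for s
  proof -
    have "s \<in> (\<lambda>x. {x}) ` bitstrings n" using that bits_finite[of n] bits_ne[of n] by simp
    then obtain x where x: "x \<in> bitstrings n" "s = {x}" by blast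
    thus ?thesis by (auto simp: Inv_def dominates_irrefl)
  qed
  show "Inv n s'" if I: "Inv n s" and s': "s' \<in> set_pmf (semo_step n s)" for s s'
  proof (cases "covers_front n s")
    case True thus ?thesis using I s' by (simp add: semo_step_def)
  next
    case False
    have nen: "{..<n} \<noteq> {}" using n0 by auto
    obtain x i where "x \<in> s" "s' = semo_update n s (flip x i)"
      using s' False nen Inv_fin[OF I] Inv_ne[OF I] by (auto simp: semo_step_def)
    thus ?thesis using upd_inv[OF I flip_bits[OF I]] by simp
  qed
  show "ennreal (G n (phi n s)) \<le> ennreal (G n 0)" for s
    using G_anti[of 0 "phi n s" n] by (simp add: ennreal_leI)
  show "(\<integral>\<^sup>+s'. ennreal (G n (phi n s')) \<partial>semo_step n s) + (if covers_front n s then 0 else 1) \<le> ennreal (G n (phi n s))"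
    if "Inv n s" for s
    using semo_drift[OF that e n0] .
qed

theorem theorem4:
  shows "\<exists>c::real. \<exists>N::nat. \<forall>n\<ge>N. even n \<longrightarrow>
           semo_expected_runtime n \<le> ennreal (c * (real n)^2 * ln (real n))"
proof (intro exI allI impI)
  fix n :: nat assume n: "3 \<le> n" "even n"
  have "semo_expected_runtime n \<le> ennreal (G n 0)" using runtime_G[OF n(2)] n(1) by simp
  also have "\<dots> \<le> ennreal (16 * (real n)^2 * ln (real n))" using G0_bound[OF n(2,1)] by (rule ennreal_leI)
  finally show "semo_expected_runtime n \<le> ennreal (16 * (real n)^2 * ln (real n))" .
qed


end
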